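(* Let $n_{\mathrm{in}}\in\mathbb{N}$, let $\Omega\subset\mathbb{R}^{n_{\mathrm{in}}}$ be compact and let $f:\Omega\to\mathbb{R}$ be continuous. For every $\epsilon>0$ there exists a discrete-time LIF-SNN $\Phi$ with direct encoding, membrane potential output, $L=2$ hidden layers and latency $T=1$ such that $\sup_{x\in\Omega}|R(\Phi)(x)-f(x)|\le\epsilon$. Moreover, if $f$ is $\Gamma$-Lipschitz with respect to $\|\cdot\|_\infty$ (i.e. $|f(x)-f(y)|\le\Gamma\|x-y\|_\infty$ for all $x,y\in\Omega$), then $\Phi$ can be chosen with hidden-layer widths $n_1=\Big(\max\Big\{\Big\lceil\frac{\operatorname{diam}_\infty(\Omega)}{\epsilon}\Gamma\Big\rceil,1\Big\}+1\Big)n_{\mathrm{in}}$ and $n_2=\max\Big\{\Big\lceil\frac{\operatorname{diam}_\infty(\Omega)}{\epsilon}\Gamma\Big\rceil^{n_{\mathrm{in}}},1\Big\}$, where $\operatorname{diam}_\infty(\Omega)=\sup_{x,y\in\Omega}\|x-y\|_\infty$.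
   Context: A discrete-time LIF-SNN $\Phi$ with $L$ hidden layers of widths $n_1,\dots,n_L$, input dimension $n_0=n_{\mathrm{in}}$, output dimension $n_{\mathrm{out}}$ and latency $T\in\mathbb{N}$ has parameters $W^\ell\in\mathbb{R}^{n_\ell\times n_{\ell-1}}$, $b^\ell\in\mathbb{R}^{n_\ell}$, $u^\ell(0)\in\mathbb{R}^{n_\ell}$, $\beta^\ell\in[0,1]$, $\vartheta^\ell>0$ ($\ell\in[L]$). With direct encoding, the initial spike activations are $s^0(t)=x$ for all $t\in[T]$, where $x\in\mathbb{R}^{n_{\mathrm{in}}}$ is the input. For $\ell\in[L]$, $t\in[T]$: $s^\ell(t)=H(\beta^\ell u^\ell(t-1)+W^\ell s^{\ell-1}(t)+b^\ell-\vartheta^\ell\mathbf{1})$ and $u^\ell(t)=\beta^\ell u^\ell(t-1)+W^\ell s^{\ell-1}(t)+b^\ell-\vartheta^\ell s^\ell(t)$, with $H$ the entrywise Heaviside function ($H(z)=1$ if $z\ge0$, else $0$). With membrane potential output, the realization is $R(\Phi)(x)=\sum_{t=1}^T a_t\,(V s^L(t)+c)\in\mathbb{R}^{n_{\mathrm{out}}}$ for decoder parameters $a\in\mathbb{R}^T$, $V\in\mathbb{R}^{n_{\mathrm{out}}\times n_L}$, $c\in\mathbb{R}^{n_{\mathrm{out}}}$. Here $n_{\mathrm{out}}=1$. *)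

theory Defs
  imports "HOL-Analysis.Analysis"
begin

text \<open>Discrete-time LIF spiking neural network with output dimension 1.
  Layer widths are given by snn_width (layer 0 = input dimension).
  Matrices are indexed as snn_W P l i j (layer l, row i, column j); only indices
  i < width l and j < width (l-1) are ever used.\<close>

record snn =
  snn_L :: nat
  snn_T :: nat
  snn_width :: "nat \<Rightarrow> nat"
  snn_W :: "nat \<Rightarrow> nat \<Rightarrow> nat \<Rightarrow> real"
  snn_b :: "nat \<Rightarrow> nat \<Rightarrow> real"
  snn_u0 :: "nat \<Rightarrow> nat \<Rightarrow> real"
  snn_beta :: "nat \<Rightarrow> real"
  snn_theta :: "nat \<Rightarrow> real"
  snn_a :: "nat \<Rightarrow> real"
  snn_V :: "nat \<Rightarrow> real"
  snn_c :: real

definition heaviside :: "real \<Rightarrow> real" where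
  "heaviside z = (if z \<ge> 0 then 1 else 0)"

text \<open>lif_state P x l t = (s^l(t), u^l(t)) with direct encoding s^0(t) = x.
  For t = 0 only the initial potential u^l(0) is meaningful.\<close>

fun lif_state :: "snn \<Rightarrow> (nat \<Rightarrow> real) \<Rightarrow> nat \<Rightarrow> nat \<Rightarrow> (nat \<Rightarrow> real) \<times> (nat \<Rightarrow> real)" where
  "lif_state P x 0 t = (x, (\<lambda>_. 0))"
| "lif_state P x (Suc k) 0 = ((\<lambda>_. 0), snn_u0 P (Suc k))"
| "lif_state P x (Suc k) (Suc t) =
     (let sp = fst (lif_state P x k (Suc t));
          up = snd (lif_state P x (Suc k) t);
          pre = (\<lambda>i. snn_beta P (Suc k) * up i
                     + (\<Sum>j<snn_width P k. snn_W P (Suc k) i j * sp j) + snn_b P (Suc k) i);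
          s = (\<lambda>i. heaviside (pre i - snn_theta P (Suc k)))
      in (s, (\<lambda>i. pre i - snn_theta P (Suc k) * s i)))"

definition snn_spikes :: "snn \<Rightarrow> (nat \<Rightarrow> real) \<Rightarrow> nat \<Rightarrow> nat \<Rightarrow> (nat \<Rightarrow> real)" where
  "snn_spikes P x l t = fst (lif_state P x l t)"

definition snn_realization :: "snn \<Rightarrow> (nat \<Rightarrow> real) \<Rightarrow> real" where
  "snn_realization P x =
     (\<Sum>t=1..snn_T P. snn_a P t *
        ((\<Sum>j<snn_width P (snn_L P). snn_V P j * snn_spikes P x (snn_L P) t j) + snn_c P))"

definition snn_wf :: "nat \<Rightarrow> snn \<Rightarrow> bool" where
  "snn_wf n P \<longleftrightarrow> snn_width P 0 = n \<and>
     (\<forall>l\<in>{1..snn_L P}. 0 \<le> snn_beta P l \<and> snn_beta P l \<le> 1 \<and> 0 < snn_theta P l)"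

definition coord_enum :: "nat \<Rightarrow> 'n::finite" where
  "coord_enum = (SOME e. bij_betw e {..<CARD('n)} (UNIV :: 'n set))"

definition vec_input :: "real^'n \<Rightarrow> nat \<Rightarrow> real" where
  "vec_input x j = x $ coord_enum j"

definition diam_inf :: "(real^'n) set \<Rightarrow> real" where
  "diam_inf \<Omega> = (SUP x\<in>\<Omega>. SUP y\<in>\<Omega>. infnorm (x - y))"

end

theory Submission
  imports Defs
begin


lemma sum_divmod:
  fixes M :: nat assumes "M > 0"
  shows "(\<Sum>q<n*M. F (q div M) (q mod M)) = (\<Sum>k<n. \<Sum>r<M. F k r)"
proof -
  have "(\<Sum>q<n*M. F (q div M) (q mod M)) = (\<Sum>k<n. \<Sum>q\<in>{k*M..<k*M+M}. F (q div M) (q mod M))"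
    by (rule sum.nat_group[symmetric])
  also have "\<dots> = (\<Sum>k<n. \<Sum>r<M. F k r)"
  proof (rule sum.cong[OF refl])
    fix k assume "k \<in> {..<n}"
    have "(\<Sum>q\<in>{k*M..<k*M+M}. F (q div M) (q mod M)) = (\<Sum>r\<in>{0..<M}. F ((r + k*M) div M) ((r+k*M) mod M))"
      using sum.shift_bounds_nat_ivl[of "\<lambda>q. F (q div M) (q mod M)" 0 "k*M" M]
      by (simp add: add.commute)
    also have "\<dots> = (\<Sum>r<M. F k r)"
      using assms by (intro sum.cong) auto
    finally show "(\<Sum>q\<in>{k*M..<k*M+M}. F (q div M) (q mod M)) = (\<Sum>r<M. F k r)" .
  qed
  finally show ?thesis .
qed

lemma coord_enum_bij: "bij_betw (coord_enum :: nat \<Rightarrow> 'n::finite) {..<CARD('n)} UNIV"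
proof -
  have "\<exists>e. bij_betw e {..<CARD('n)} (UNIV :: 'n set)"
    using ex_bij_betw_nat_finite[of "UNIV :: 'n set"] by (simp add: atLeast0LessThan)
  then show ?thesis unfolding coord_enum_def by (rule someI_ex)
qed

lemma spikes_1: "snn_spikes P x (Suc k) (Suc 0) = (\<lambda>i. heaviside (snn_beta P (Suc k) * snn_u0 P (Suc k) i
                     + (\<Sum>j<snn_width P k. snn_W P (Suc k) i j * snn_spikes P x k (Suc 0) j) + snn_b P (Suc k) i - snn_theta P (Suc k)))"
  by (simp add: snn_spikes_def Let_def)

lemma step_ex: "(s::nat\<Rightarrow>real) 0 = 1 \<Longrightarrow> s N \<noteq> 1 \<Longrightarrow> \<exists>a<N. s a = 1 \<and> s (Suc a) \<noteq> 1"
proof (induction N)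
  case 0 then show ?case by simp
next
  case (Suc N)
  then show ?case by (cases "s N = 1") (auto intro: less_SucI)
qed

lemma infnorm_le_cart: "(\<And>i. \<bar>(x::real^'n) $ i\<bar> \<le> e) \<Longrightarrow> infnorm x \<le> e"
  unfolding infnorm_cart by (rule cSup_least) auto



lemma delta2:
  fixes X :: "nat \<Rightarrow> real" assumes "a < N"
  shows "(\<Sum>r<Suc N. (if r = a then 1 else if r = Suc a then -1 else 0) * X r) = X a - X (Suc a)"
proof -
  have "(\<Sum>r<Suc N. (if r = a then 1 else if r = Suc a then -1 else 0) * X r)
     = (\<Sum>r<Suc N. (if r = a then X r else 0) + (if r = Suc a then - X r else 0))"
    by (intro sum.cong) auto
  also have "\<dots> = X a - X (Suc a)" using assms by (simp add: sum.distrib)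
  finally show ?thesis .
qed

lemma sum01:
  fixes d :: "nat \<Rightarrow> real"
  assumes "\<And>k. k < n \<Longrightarrow> d k = 0 \<or> d k = 1"
  shows "((\<Sum>k<n. d k) - real n \<ge> 0) \<longleftrightarrow> (\<forall>k<n. d k = 1)"
proof -
  have e: "(\<Sum>k<n. d k) - real n = - (\<Sum>k<n. 1 - d k)" by (simp add: sum_subtractf)
  have nn: "\<forall>k\<in>{..<n}. 0 \<le> 1 - d k" using assms by force
  have "(\<Sum>k<n. 1 - d k) \<ge> 0" using nn by (intro sum_nonneg) auto
  then have "((\<Sum>k<n. d k) - real n \<ge> 0) \<longleftrightarrow> (\<Sum>k<n. 1 - d k) = 0" using e by linarith
  also have "\<dots> \<longleftrightarrow> (\<forall>k\<in>{..<n}. 1 - d k = 0)" using nn by (intro sum_nonneg_eq_0_iff) auto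
  finally show ?thesis by auto
qed

lemma heav01: "heaviside z = 0 \<or> heaviside z = 1" by (simp add: heaviside_def)



lemma core:
  fixes \<Omega> :: "'a set" and emb :: "'a \<Rightarrow> nat \<Rightarrow> real" and f :: "'a \<Rightarrow> real" and m :: "nat \<Rightarrow> real"
  assumes N: "N \<ge> 1" and h: "h > 0"
    and bnd: "\<forall>x\<in>\<Omega>. \<forall>k<n. m k \<le> emb x k \<and> emb x k \<le> m k + real N * h"
  shows "\<exists>P. snn_wf n P \<and> snn_L P = 2 \<and> snn_T P = 1 \<and> snn_width P 1 = (N+1)*n \<and> snn_width P 2 = N^n \<and>
     (\<forall>x\<in>\<Omega>. \<exists>y\<in>\<Omega>. (\<forall>k<n. \<bar>emb x k - emb y k\<bar> \<le> h) \<and> snn_realization P (emb x) = f y)"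
proof -
  define Sg where "Sg k v j = (if j = 0 then 1 else if j < N then heaviside (v - (m k + real j * h)) else (0::real))" for k v j
  define D where "D = PiE {..<n} (\<lambda>_. {..<N})"
  have "finite D" unfolding D_def by (intro finite_PiE) auto
  have "card D = N^n" by (simp add: D_def card_PiE)
  then obtain g where g: "bij_betw g {..<N^n} D"
    using finite_same_card_bij[OF _ \<open>finite D\<close>, of "{..<N^n}"] by auto
  define inc where "inc a v \<longleftrightarrow> (\<forall>k<n. Sg k (v k) (a k) = 1 \<and> Sg k (v k) (Suc (a k)) \<noteq> 1)"
    for a and v :: "nat \<Rightarrow> real"
  define val where "val a = (if \<exists>y\<in>\<Omega>. inc a (emb y) then f (SOME y. y\<in>\<Omega> \<and> inc a (emb y)) else 0)" for a
  define P where "P = \<lparr> snn_L = 2, snn_T = 1,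
     snn_width = (\<lambda>l. if l = 0 then n else if l = 1 then (N+1)*n else N^n),
     snn_W = (\<lambda>l i j. if l = 1 then (if 0 < i mod (N+1) \<and> i mod (N+1) < N \<and> j = i div (N+1) then 1 else 0)
        else (if j mod (N+1) = g i (j div (N+1)) then 1 else if j mod (N+1) = Suc (g i (j div (N+1))) then -1 else 0)),
     snn_b = (\<lambda>l i. if l = 1 then (if i mod (N+1) = 0 then 1 else if i mod (N+1) < N then 1 - (m (i div (N+1)) + real (i mod (N+1)) * h) else 0)
        else 1 - real n),
     snn_u0 = (\<lambda>_ _. 0), snn_beta = (\<lambda>_. 0), snn_theta = (\<lambda>_. 1),
     snn_a = (\<lambda>_. 1), snn_V = (\<lambda>p. val (g p)), snn_c = 0 \<rparr>"
  have Sg01: "Sg k v j = 0 \<or> Sg k v j = 1" for k v j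
    unfolding Sg_def using heav01 by auto
  have Sgmono: "Sg k v j' \<le> Sg k v j" if "j \<le> j'" for k v j j'
  proof -
    have "m k + real j * h \<le> m k + real j' * h" using that h by (simp add: mult_right_mono)
    then show ?thesis using that Sg01[of k v j'] unfolding Sg_def heaviside_def by auto
  qed
  have L1: "snn_spikes P v (Suc 0) (Suc 0) q = Sg (q div (N+1)) (v (q div (N+1))) (q mod (N+1))"
    if q: "q < (N+1)*n" for v q
  proof -
    have kn: "q div (N+1) < n" using q by (simp add: less_mult_imp_div_less mult.commute)
    have s0: "snn_spikes P v 0 (Suc 0) = v" by (simp add: snn_spikes_def)
    have "(\<Sum>j<n. (if 0 < q mod (N+1) \<and> q mod (N+1) < N \<and> j = q div (N+1) then 1 else 0) * v j)
       = (if 0 < q mod (N+1) \<and> q mod (N+1) < N then v (q div (N+1)) else 0)"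
    proof -
      have "(\<Sum>j<n. (if 0 < q mod (N+1) \<and> q mod (N+1) < N \<and> j = q div (N+1) then 1 else 0) * v j)
         = (\<Sum>j<n. if j = q div (N+1) then (if 0 < q mod (N+1) \<and> q mod (N+1) < N then v (q div (N+1)) else 0) else 0)"
        by (intro sum.cong) auto
      then show ?thesis using kn by simp
    qed
    then show ?thesis
      unfolding spikes_1 s0 by (simp add: P_def Sg_def heaviside_def algebra_simps)
  qed
  have L2: "snn_spikes P v (Suc (Suc 0)) (Suc 0) p = (if inc (g p) v then 1 else 0)"
    if p: "p < N^n" for v p
  proof -
    have gp: "g p \<in> D" using g p by (auto simp: bij_betw_def)
    then have gpk: "k < n \<Longrightarrow> g p k < N" for k by (auto simp: D_def PiE_iff)
    define d where "d k = Sg k (v k) (g p k) - Sg k (v k) (Suc (g p k))" for k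
    have "(\<Sum>q<(N+1)*n. snn_W P (Suc (Suc 0)) p q * snn_spikes P v (Suc 0) (Suc 0) q)
        = (\<Sum>q<n*(N+1). (\<lambda>k r. (if r = g p k then 1 else if r = Suc (g p k) then -1 else 0) * Sg k (v k) r) (q div (N+1)) (q mod (N+1)))"
    proof (intro sum.cong)
      show "{..<(N+1)*n} = {..<n*(N+1)}" by (simp add: mult.commute)
      fix q assume "q \<in> {..<n*(N+1)}"
      then have q: "q < (N+1)*n" by (simp add: mult.commute)
      have W: "snn_W P (Suc (Suc 0)) p q = (if q mod (N+1) = g p (q div (N+1)) then 1 else if q mod (N+1) = Suc (g p (q div (N+1))) then -1 else 0)"
        by (simp add: P_def)
      show "snn_W P (Suc (Suc 0)) p q * snn_spikes P v (Suc 0) (Suc 0) q = (\<lambda>k r. (if r = g p k then 1 else if r = Suc (g p k) then -1 else 0) * Sg k (v k) r) (q div (N+1)) (q mod (N+1))"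
        unfolding W L1[OF q] by simp
    qed
    also have "\<dots> = (\<Sum>k<n. \<Sum>r<Suc N. (if r = g p k then 1 else if r = Suc (g p k) then -1 else 0) * Sg k (v k) r)"
      by (subst sum_divmod) auto
    also have "\<dots> = (\<Sum>k<n. d k)"
    proof (rule sum.cong[OF refl])
      fix k assume "k \<in> {..<n}"
      then have "g p k < N" using gpk by auto
      from delta2[OF this, of "Sg k (v k)"] show "(\<Sum>r<Suc N. (if r = g p k then 1 else if r = Suc (g p k) then -1 else 0) * Sg k (v k) r) = d k"
        unfolding d_def .
    qed
    finally have S: "(\<Sum>q<(N+1)*n. snn_W P (Suc (Suc 0)) p q * snn_spikes P v (Suc 0) (Suc 0) q) = (\<Sum>k<n. d k)" .
    have d01: "d k = 0 \<or> d k = 1" for k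
      using Sg01[of k "v k" "g p k"] Sg01[of k "v k" "Suc (g p k)"] Sgmono[of "g p k" "Suc (g p k)" k "v k"]
      unfolding d_def by auto
    have d1: "d k = 1 \<longleftrightarrow> Sg k (v k) (g p k) = 1 \<and> Sg k (v k) (Suc (g p k)) \<noteq> 1" for k
      using Sg01[of k "v k" "g p k"] Sg01[of k "v k" "Suc (g p k)"] unfolding d_def by auto
    have "snn_spikes P v (Suc (Suc 0)) (Suc 0) p = heaviside ((\<Sum>k<n. d k) - real n)"
    proof -
      have pr: "snn_beta P (Suc (Suc 0)) = 0" "snn_theta P (Suc (Suc 0)) = 1" "snn_b P (Suc (Suc 0)) p = 1 - real n"
        "snn_width P (Suc 0) = (N+1)*n" by (simp_all add: P_def)
      show ?thesis unfolding spikes_1[of P v "Suc 0"] pr S by (simp add: algebra_simps)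
    qed
    also have "\<dots> = (if inc (g p) v then 1 else 0)"
      using sum01[of n d] d01 d1 unfolding heaviside_def inc_def by auto
    finally show ?thesis .
  qed
  have R: "snn_realization P v = (\<Sum>p<N^n. val (g p) * (if inc (g p) v then 1 else 0))" for v
  proof -
    have "snn_realization P v = (\<Sum>p<N^n. val (g p) * snn_spikes P v (Suc (Suc 0)) (Suc 0) p)"
      unfolding snn_realization_def by (simp add: P_def numeral_2_eq_2)
    also have "\<dots> = (\<Sum>p<N^n. val (g p) * (if inc (g p) v then 1 else 0))"
      by (intro sum.cong) (auto simp: L2)
    finally show ?thesis .
  qed
  have interval: "m k + real a * h \<le> w \<and> w \<le> m k + real (Suc a) * h"
    if "Sg k w a = 1" "Sg k w (Suc a) \<noteq> 1" "a < N" "m k \<le> w" "w \<le> m k + real N * h" for k w a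
  proof
    show "m k + real a * h \<le> w"
      using that unfolding Sg_def heaviside_def by (cases "a = 0") (auto split: if_splits)
    show "w \<le> m k + real (Suc a) * h"
    proof (cases "Suc a < N")
      case True then show ?thesis using that unfolding Sg_def heaviside_def by (auto split: if_splits)
    next
      case False then have "Suc a = N" using that by auto
      then show ?thesis using that by simp
    qed
  qed
  have uniq: "a = b" if "Sg k w a = 1" "Sg k w (Suc a) \<noteq> 1" "Sg k w b = 1" "Sg k w (Suc b) \<noteq> 1" for k w a b
  proof (rule ccontr)
    assume "a \<noteq> b"
    then consider "Suc a \<le> b" | "Suc b \<le> a" by linarith
    then show False
    proof cases
      case 1 then show False using Sgmono[OF 1, of k w] that Sg01[of k w "Suc a"] by auto
    next
      case 2 then show False using Sgmono[OF 2, of k w] that Sg01[of k w "Suc b"] by auto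
    qed
  qed
  have main: "\<exists>y\<in>\<Omega>. (\<forall>k<n. \<bar>emb x k - emb y k\<bar> \<le> h) \<and> snn_realization P (emb x) = f y" if x: "x \<in> \<Omega>" for x
  proof -
    define v where "v = emb x"
    have "\<forall>k. \<exists>a. k < n \<longrightarrow> a < N \<and> Sg k (v k) a = 1 \<and> Sg k (v k) (Suc a) \<noteq> 1"
    proof (intro allI)
      fix k
      have "Sg k (v k) 0 = 1" "Sg k (v k) N \<noteq> 1" using N by (auto simp: Sg_def)
      from step_ex[of "Sg k (v k)", OF this] show "\<exists>a. k < n \<longrightarrow> a < N \<and> Sg k (v k) a = 1 \<and> Sg k (v k) (Suc a) \<noteq> 1"
        by blast
    qed
    then obtain A where A: "\<And>k. k < n \<Longrightarrow> A k < N \<and> Sg k (v k) (A k) = 1 \<and> Sg k (v k) (Suc (A k)) \<noteq> 1"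
      by metis
    define cx where "cx = restrict A {..<n}"
    have cxD: "cx \<in> D" using A by (auto simp: cx_def D_def)
    have inccx: "inc cx v" using A by (auto simp: inc_def cx_def)
    obtain p0 where p0: "p0 < N^n" "g p0 = cx" using g cxD by (auto simp: bij_betw_def)
    have "inc (g p) v \<longleftrightarrow> p = p0" if p: "p < N^n" for p
    proof
      assume ip: "inc (g p) v"
      have gp: "g p \<in> D" using g p by (auto simp: bij_betw_def)
      have "g p = cx"
      proof
        fix k show "g p k = cx k"
        proof (cases "k < n")
          case True then show ?thesis using ip inccx uniq unfolding inc_def by blast
        next
          case False then show ?thesis using gp cxD by (auto simp: D_def PiE_iff extensional_def)
        qed
      qed
      then show "p = p0" using g p p0 by (auto simp: bij_betw_def inj_on_def)
    next
      assume "p = p0" then show "inc (g p) v" using p0 inccx by simp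
    qed
    then have "(\<Sum>p<N^n. val (g p) * (if inc (g p) v then 1 else 0)) = (\<Sum>p<N^n. if p = p0 then val (g p) else 0)"
      by (intro sum.cong) auto
    then have "snn_realization P v = val cx"
      using p0 unfolding R by simp
    moreover have ex: "\<exists>y\<in>\<Omega>. inc cx (emb y)" using x inccx v_def by blast
    define y where "y = (SOME y. y\<in>\<Omega> \<and> inc cx (emb y))"
    have y: "y \<in> \<Omega>" "inc cx (emb y)" using someI_ex[of "\<lambda>y. y\<in>\<Omega> \<and> inc cx (emb y)"] ex unfolding y_def by auto
    have "val cx = f y" using ex unfolding val_def y_def by simp
    moreover have "\<bar>emb x k - emb y k\<bar> \<le> h" if k: "k < n" for k
    proof -
      have c: "cx k < N" using A k by (simp add: cx_def)
      have i1: "m k + real (cx k) * h \<le> emb x k \<and> emb x k \<le> m k + real (Suc (cx k)) * h"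
        using interval[of k "emb x k" "cx k"] inccx c bnd x k unfolding inc_def v_def by auto
      have i2: "m k + real (cx k) * h \<le> emb y k \<and> emb y k \<le> m k + real (Suc (cx k)) * h"
        using interval[of k "emb y k" "cx k"] y c bnd k unfolding inc_def by auto
      show ?thesis using i1 i2 by (simp add: algebra_simps abs_le_iff)
    qed
    ultimately show ?thesis using y v_def by auto
  qed
  have "snn_wf n P \<and> snn_L P = 2 \<and> snn_T P = 1 \<and> snn_width P 1 = (N+1)*n \<and> snn_width P 2 = N^n"
    by (simp add: P_def snn_wf_def)
  then show ?thesis using main by blast
qed



lemma const_net: "\<exists>P. snn_wf n P \<and> snn_L P = 2 \<and> snn_T P = 1 \<and> snn_width P 1 = w1 \<and> snn_width P 2 = w2 \<and>
   (\<forall>v. snn_realization P v = c)"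
proof -
  define P where "P = \<lparr> snn_L = 2, snn_T = 1,
     snn_width = (\<lambda>l. if l = 0 then n else if l = 1 then w1 else w2),
     snn_W = (\<lambda>l i j. 0), snn_b = (\<lambda>l i. 0),
     snn_u0 = (\<lambda>_ _. 0), snn_beta = (\<lambda>_. 0), snn_theta = (\<lambda>_. 1),
     snn_a = (\<lambda>_. 1), snn_V = (\<lambda>p. 0), snn_c = c \<rparr>"
  have "snn_realization P v = c" for v by (simp add: P_def snn_realization_def)
  moreover have "snn_wf n P \<and> snn_L P = 2 \<and> snn_T P = 1 \<and> snn_width P 1 = w1 \<and> snn_width P 2 = w2"
    by (simp add: P_def snn_wf_def)
  ultimately show ?thesis by blast
qed

lemma diam_le:
  assumes "bounded \<Omega>" "x \<in> \<Omega>" "y \<in> \<Omega>"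
  shows "infnorm (x - y) \<le> diam_inf (\<Omega> :: (real^'n) set)"
proof -
  obtain B where B: "\<forall>z\<in>\<Omega>. norm z \<le> B" using assms(1) bounded_pos by auto
  have b: "infnorm (a - b) \<le> 2*B" if "a \<in> \<Omega>" "b \<in> \<Omega>" for a b
  proof -
    have "infnorm (a - b) \<le> norm (a - b)" by (rule infnorm_le_norm)
    also have "\<dots> \<le> norm a + norm b" by (rule norm_triangle_ineq4)
    finally have "infnorm (a - b) \<le> norm a + norm b" .
    moreover have "norm a \<le> B" "norm b \<le> B" using B that by auto
    ultimately show ?thesis by linarith
  qed
  have ba: "bdd_above ((\<lambda>b. infnorm (a - b)) ` \<Omega>)" if "a \<in> \<Omega>" for a
    using b that by (auto intro!: bdd_aboveI2)
  have i1: "infnorm (x - y) \<le> (SUP b\<in>\<Omega>. infnorm (x - b))"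
    using assms ba by (intro cSUP_upper) auto
  have "(SUP b\<in>\<Omega>. infnorm (a - b)) \<le> 2*B" if "a \<in> \<Omega>" for a
    using assms b that by (intro cSUP_least) auto
  then have "bdd_above ((\<lambda>a. SUP b\<in>\<Omega>. infnorm (a - b)) ` \<Omega>)"
    by (auto intro!: bdd_aboveI2)
  then have "(SUP b\<in>\<Omega>. infnorm (x - b)) \<le> diam_inf \<Omega>"
    unfolding diam_inf_def using assms by (intro cSUP_upper) auto
  then show ?thesis using i1 by linarith
qed

lemma coords_infnorm:
  fixes x y :: "real^'n"
  assumes "\<forall>k<CARD('n). \<bar>vec_input x k - vec_input y k\<bar> \<le> h"
  shows "infnorm (x - y) \<le> h"
proof (rule infnorm_le_cart)
  fix i :: 'n
  obtain k where "k < CARD('n)" "coord_enum k = i"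
    using coord_enum_bij[where 'n='n] by (metis UNIV_I bij_betw_iff_bijections lessThan_iff)
  then show "\<bar>(x - y) $ i\<bar> \<le> h" using assms by (auto simp: vec_input_def)
qed



lemma part1:
  fixes \<Omega> :: "(real^'n) set" and f :: "real^'n \<Rightarrow> real" and \<epsilon> :: real
  assumes "compact \<Omega>" and "continuous_on \<Omega> f" and "\<epsilon> > 0"
  shows "\<exists>P. snn_wf CARD('n) P \<and> snn_L P = 2 \<and> snn_T P = 1 \<and>
            (\<forall>x\<in>\<Omega>. \<bar>snn_realization P (vec_input x) - f x\<bar> \<le> \<epsilon>)"
proof -
  have "bounded \<Omega>" using assms(1) compact_imp_bounded by auto
  then obtain B where B: "B > 0" "\<forall>x\<in>\<Omega>. norm x \<le> B" using bounded_pos by auto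
  have "uniformly_continuous_on \<Omega> f" using assms compact_uniformly_continuous by blast
  then obtain \<delta> where \<delta>: "\<delta> > 0" "\<forall>x\<in>\<Omega>. \<forall>x'\<in>\<Omega>. dist x' x < \<delta> \<longrightarrow> dist (f x') (f x) < \<epsilon>"
    using assms(3) unfolding uniformly_continuous_on_def by metis
  define n where "n = CARD('n)"
  define N where "N = nat \<lceil>2 * B* sqrt (real n)/\<delta>\<rceil> + 1"
  define h where "h = 2 * B / real N"
  have N1: "N \<ge> 1" by (simp add: N_def)
  have Ngt: "real N > 2 * B* sqrt (real n)/\<delta>" unfolding N_def
    using real_nat_ceiling_ge[of "2 * B * sqrt (real n)/\<delta>"] by simp
  have hpos: "h > 0" using B N1 by (simp add: h_def)
  have Nh: "real N * h = 2 * B" using N1 by (simp add: h_def)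
  have sh: "sqrt (real n) * h < \<delta>"
  proof -
    have "2 * B* sqrt (real n) < \<delta> * real N" using Ngt \<delta>(1) by (simp add: divide_less_eq mult.commute)
    then show ?thesis using N1 by (simp add: h_def field_simps)
  qed
  have bnd: "\<forall>x\<in>\<Omega>. \<forall>k<n. (\<lambda>_. -B) k \<le> vec_input x k \<and> vec_input x k \<le> (\<lambda>_. -B) k + real N * h"
  proof (intro ballI allI impI)
    fix x k assume "x \<in> \<Omega>" "k < n"
    have "\<bar>x $ coord_enum k\<bar> \<le> norm x" by (rule component_le_norm_cart)
    then show "(\<lambda>_. -B) k \<le> vec_input x k \<and> vec_input x k \<le> (\<lambda>_. -B) k + real N * h"
      using B \<open>x \<in> \<Omega>\<close> Nh by (auto simp: vec_input_def abs_le_iff)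
  qed
  obtain P where P: "snn_wf n P" "snn_L P = 2" "snn_T P = 1"
    "\<forall>x\<in>\<Omega>. \<exists>y\<in>\<Omega>. (\<forall>k<n. \<bar>vec_input x k - vec_input y k\<bar> \<le> h) \<and> snn_realization P (vec_input x) = f y"
    using core[OF N1 hpos bnd, of f] by blast
  have "\<bar>snn_realization P (vec_input x) - f x\<bar> \<le> \<epsilon>" if x: "x \<in> \<Omega>" for x
  proof -
    obtain y where y: "y \<in> \<Omega>" "\<forall>k<n. \<bar>vec_input x k - vec_input y k\<bar> \<le> h" "snn_realization P (vec_input x) = f y"
      using P(4) x by blast
    have "infnorm (x - y) \<le> h" using coords_infnorm y(2) n_def by blast
    then have "sqrt (real n) * infnorm (x - y) \<le> sqrt (real n) * h"
      by (intro mult_left_mono) auto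
    moreover have "norm (x - y) \<le> sqrt (real n) * infnorm (x - y)"
      using norm_le_infnorm[of "x - y"] by (simp add: n_def)
    ultimately have "norm (x - y) \<le> sqrt (real n) * h" by linarith
    then have "dist y x < \<delta>" using sh by (simp add: dist_norm norm_minus_commute)
    then have "dist (f y) (f x) < \<epsilon>" using \<delta>(2) x y(1) by blast
    then show ?thesis using y(3) by (simp add: dist_real_def)
  qed
  then show ?thesis using P n_def by blast
qed



lemma part2:
  fixes \<Omega> :: "(real^'n) set" and f :: "real^'n \<Rightarrow> real" and \<epsilon> :: real and \<Gamma> :: real
  assumes "compact \<Omega>" and "\<epsilon> > 0"
    and lip: "\<forall>x\<in>\<Omega>. \<forall>y\<in>\<Omega>. \<bar>f x - f y\<bar> \<le> \<Gamma> * infnorm (x - y)"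
  shows "\<exists>P. snn_wf CARD('n) P \<and> snn_L P = 2 \<and> snn_T P = 1 \<and>
               snn_width P 1 = nat ((max \<lceil>diam_inf \<Omega> / \<epsilon> * \<Gamma>\<rceil> 1 + 1) * int CARD('n)) \<and>
               snn_width P 2 = nat (max (\<lceil>diam_inf \<Omega> / \<epsilon> * \<Gamma>\<rceil> ^ CARD('n)) 1) \<and>
               (\<forall>x\<in>\<Omega>. \<bar>snn_realization P (vec_input x) - f x\<bar> \<le> \<epsilon>)"
proof -
  define n where "n = CARD('n)"
  define d where "d = diam_inf \<Omega>"
  define C where "C = \<lceil>d / \<epsilon> * \<Gamma>\<rceil>"
  define w1 where "w1 = nat ((max C 1 + 1) * int n)"
  define w2 where "w2 = nat (max (C ^ n) 1)"
  have bdd: "bounded \<Omega>" using assms(1) compact_imp_bounded by auto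
  have dle: "infnorm (x - y) \<le> d" if "x \<in> \<Omega>" "y \<in> \<Omega>" for x y
    using diam_le[OF bdd that] d_def by simp
  have goal: "\<exists>P. snn_wf n P \<and> snn_L P = 2 \<and> snn_T P = 1 \<and> snn_width P 1 = w1 \<and> snn_width P 2 = w2 \<and>
               (\<forall>x\<in>\<Omega>. \<bar>snn_realization P (vec_input x) - f x\<bar> \<le> \<epsilon>)"
  proof (cases "\<Omega> = {}")
    case True then show ?thesis using const_net[of n w1 w2 0] by auto
  next
    case False
    then obtain x0 where x0: "x0 \<in> \<Omega>" by auto
    have d0: "d \<ge> 0" using dle[OF x0 x0] infnorm_pos_le[of "x0 - x0"] by linarith
    show ?thesis
    proof (cases "C \<le> 0")
      case True
      then have q: "d / \<epsilon> * \<Gamma> \<le> 0" unfolding C_def by linarith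
      have "\<bar>f x0 - f x\<bar> \<le> 0" if x: "x \<in> \<Omega>" for x
      proof -
        have i0: "infnorm (x0 - x) \<ge> 0" by (rule infnorm_pos_le)
        have "\<Gamma> * infnorm (x0 - x) \<le> 0"
        proof (cases "\<Gamma> \<le> 0")
          case True then show ?thesis using i0 by (simp add: mult_nonpos_nonneg)
        next
          case False
          have "d / \<epsilon> \<le> 0"
          proof (rule ccontr)
            assume "\<not> d / \<epsilon> \<le> 0"
            then have "d / \<epsilon> * \<Gamma> > 0" using False by (intro mult_pos_pos) auto
            then show False using q by linarith
          qed
          then have "d \<le> 0" using assms(2) by (simp add: divide_le_0_iff)
          then have "infnorm (x0 - x) \<le> 0" using dle[OF x0 x] by linarith
          then show ?thesis using False i0 by (simp add: mult_nonneg_nonpos)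
        qed
        then show ?thesis using lip x0 x by force
      qed
      then show ?thesis using const_net[of n w1 w2 "f x0"] assms(2) by force
    next
      case False
      then have C1: "C \<ge> 1" by simp
      define N where "N = nat C"
      have N1: "N \<ge> 1" using C1 N_def by simp
      have CN: "C = int N" using C1 N_def by simp
      have pos: "d / \<epsilon> * \<Gamma> > 0" using C1 unfolding C_def by linarith
      have dpos: "d > 0" and Gpos: "\<Gamma> > 0" using pos d0 assms(2)
        by (auto simp: zero_less_mult_iff zero_less_divide_iff)
      define h where "h = d / real N"
      have hpos: "h > 0" using dpos N1 by (simp add: h_def)
      have Nh: "real N * h = d" using N1 by (simp add: h_def)
      have "d / \<epsilon> * \<Gamma> \<le> of_int C" unfolding C_def by (rule le_of_int_ceiling)
      then have Nge: "d / \<epsilon> * \<Gamma> \<le> real N" using CN by simp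
      define m where "m k = Inf ((\<lambda>x. x $ coord_enum k) ` \<Omega>)" for k
      have bb: "bdd_below ((\<lambda>x. x $ coord_enum k) ` \<Omega>)" for k
      proof -
        obtain B where "\<forall>x\<in>\<Omega>. norm x \<le> B" using bdd bounded_pos by auto
        have "- B \<le> x $ coord_enum k" if "x \<in> \<Omega>" for x
        proof -
          have "\<bar>x $ coord_enum k\<bar> \<le> norm x" by (rule component_le_norm_cart)
          then show ?thesis using \<open>\<forall>x\<in>\<Omega>. norm x \<le> B\<close> that by (auto simp: abs_le_iff)
        qed
        then have "\<forall>x\<in>\<Omega>. - B \<le> x $ coord_enum k" by blast
        then show ?thesis by (auto intro!: bdd_belowI2)
      qed
      have bnd: "\<forall>x\<in>\<Omega>. \<forall>k<n. m k \<le> vec_input x k \<and> vec_input x k \<le> m k + real N * h"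
      proof (intro ballI allI impI conjI)
        fix x k assume x: "x \<in> \<Omega>" and "k < n"
        show "m k \<le> vec_input x k" unfolding m_def vec_input_def using x bb by (intro cInf_lower) auto
        have "x $ coord_enum k - d \<le> y $ coord_enum k" if y: "y \<in> \<Omega>" for y
        proof -
          have "\<bar>(x - y) $ coord_enum k\<bar> \<le> infnorm (x - y)" by (rule component_le_infnorm_cart)
          then show ?thesis using dle[OF x y] by (simp add: abs_le_iff)
        qed
        then have "x $ coord_enum k - d \<le> m k" unfolding m_def using x by (intro cInf_greatest) auto
        then show "vec_input x k \<le> m k + real N * h" using Nh by (simp add: vec_input_def)
      qed
      obtain P where P: "snn_wf n P" "snn_L P = 2" "snn_T P = 1" "snn_width P 1 = (N+1)*n" "snn_width P 2 = N^n"
        "\<forall>x\<in>\<Omega>. \<exists>y\<in>\<Omega>. (\<forall>k<n. \<bar>vec_input x k - vec_input y k\<bar> \<le> h) \<and> snn_realization P (vec_input x) = f y"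
        using core[OF N1 hpos bnd, of f] by blast
      have mC: "max C 1 = int N" using CN C1 by simp
      have "(max C 1 + 1) * int n = int ((N+1)*n)" unfolding mC by (simp add: algebra_simps)
      then have w1: "w1 = (N+1)*n" unfolding w1_def by (simp only: nat_int)
      have "C ^ n = int (N ^ n)" using CN by simp
      moreover have "int (N ^ n) \<ge> 1" using N1 by simp
      ultimately have "max (C ^ n) 1 = int (N ^ n)" by (simp only: max_def) auto
      then have w2: "w2 = N^n" unfolding w2_def by (simp only: nat_int)
      have "\<bar>snn_realization P (vec_input x) - f x\<bar> \<le> \<epsilon>" if x: "x \<in> \<Omega>" for x
      proof -
        obtain y where y: "y \<in> \<Omega>" "\<forall>k<n. \<bar>vec_input x k - vec_input y k\<bar> \<le> h" "snn_realization P (vec_input x) = f y"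
          using P(6) x by blast
        have "infnorm (x - y) \<le> h" using coords_infnorm y(2) unfolding n_def by blast
        then have "infnorm (y - x) \<le> h" by (simp add: infnorm_sub)
        then have "\<Gamma> * infnorm (y - x) \<le> \<Gamma> * h" using Gpos by (simp add: mult_left_mono)
        also have "\<Gamma> * h \<le> \<epsilon>"
        proof -
          have "d * \<Gamma> \<le> \<epsilon> * real N" using Nge assms(2) by (simp add: field_simps)
          then show ?thesis using N1 by (simp add: h_def field_simps)
        qed
        finally have "\<bar>f y - f x\<bar> \<le> \<epsilon>" using lip x y(1) by (meson order_trans)
        then show ?thesis using y(3) by simp
      qed
      then show ?thesis using P w1 w2 by auto
    qed
  qed
  then show ?thesis unfolding n_def w1_def w2_def C_def d_def .
qed


theorem theorem3p2:
  fixes \<Omega> :: "(real^'n) set" and f :: "real^'n \<Rightarrow> real" and \<epsilon> :: real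
  assumes "compact \<Omega>" and "continuous_on \<Omega> f" and "\<epsilon> > 0"
  shows "(\<exists>P. snn_wf CARD('n) P \<and> snn_L P = 2 \<and> snn_T P = 1 \<and>
            (\<forall>x\<in>\<Omega>. \<bar>snn_realization P (vec_input x) - f x\<bar> \<le> \<epsilon>))
       \<and> (\<forall>\<Gamma>::real. (\<forall>x\<in>\<Omega>. \<forall>y\<in>\<Omega>. \<bar>f x - f y\<bar> \<le> \<Gamma> * infnorm (x - y)) \<longrightarrow>
            (\<exists>P. snn_wf CARD('n) P \<and> snn_L P = 2 \<and> snn_T P = 1 \<and>
               snn_width P 1 = nat ((max \<lceil>diam_inf \<Omega> / \<epsilon> * \<Gamma>\<rceil> 1 + 1) * int CARD('n)) \<and>
               snn_width P 2 = nat (max (\<lceil>diam_inf \<Omega> / \<epsilon> * \<Gamma>\<rceil> ^ CARD('n)) 1) \<and>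
               (\<forall>x\<in>\<Omega>. \<bar>snn_realization P (vec_input x) - f x\<bar> \<le> \<epsilon>)))"
  proof (intro conjI allI impI)
  show "\<exists>P. snn_wf CARD('n) P \<and> snn_L P = 2 \<and> snn_T P = 1 \<and>
            (\<forall>x\<in>\<Omega>. \<bar>snn_realization P (vec_input x) - f x\<bar> \<le> \<epsilon>)"
    by (rule part1[OF assms])
next
  fix \<Gamma> :: real
  assume "\<forall>x\<in>\<Omega>. \<forall>y\<in>\<Omega>. \<bar>f x - f y\<bar> \<le> \<Gamma> * infnorm (x - y)"
  then show "\<exists>P. snn_wf CARD('n) P \<and> snn_L P = 2 \<and> snn_T P = 1 \<and>
               snn_width P 1 = nat ((max \<lceil>diam_inf \<Omega> / \<epsilon> * \<Gamma>\<rceil> 1 + 1) * int CARD('n)) \<and>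
               snn_width P 2 = nat (max (\<lceil>diam_inf \<Omega> / \<epsilon> * \<Gamma>\<rceil> ^ CARD('n)) 1) \<and>
               (\<forall>x\<in>\<Omega>. \<bar>snn_realization P (vec_input x) - f x\<bar> \<le> \<epsilon>)"
    by (rule part2[OF assms(1) assms(3)])
qed

end
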